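(* Let $n\ge2$ and let $A=(a_{ij})\in\mathbb{R}^{n\times n}$ be pseudo-diagonalizable. (1) If $n=2$, then $A$ is separable if and only if $a_{11}+a_{22}=0$. (2) If $n\ge3$, then $A$ is separable if and only if $a_{ii}=0$ for all $i\in[n]$. (3) $A$ is an optimal-node matrix if and only if there exists $k\in[n]$ such that $a_{kk}\ge0$ and $a_{ii}\le0$ for all $i\in[n]$ with $i\ne k$.
   Context: Max-plus conventions: $\varepsilon=-\infty$, $\oplus=\max$, $\otimes=+$, $(A\otimes B)_{ij}=\max_t(A_{it}+B_{tj})$. A matrix $P\in\overline{\mathbb{R}}^{n\times n}$ is invertible iff it has exactly one real entry in each row and column (others $\varepsilon$); $A,B$ are similar if $B=P^{-1}\otimes A\otimes P$ for invertible $P$. A square matrix is pseudo-diagonal if its diagonal entries are real and off-diagonal entries equal the real number $0$; pseudo-diagonalizable means similar to a pseudo-diagonal matrix. A finite matrix $A=(a_{ij})$ is separable if there are reals $u_i,v_j$ with $a_{ij}=u_i+v_j$ for all $i,j$; it is an optimal-node matrix if there is $k\in[n]$ with $a_{ik}+a_{kj}\ge a_{il}+a_{lj}$ for all $i,j,l\in[n]$. *)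

theory Defs
  imports "HOL-Library.Extended_Real"
begin

text \<open>Max-plus matrices of size n x n, indexed by 0..n-1; entries in ereal,
  where -\<infinity> plays the role of epsilon (the value +\<infinity> is excluded where relevant).\<close>

type_synonym mpmat = "nat \<Rightarrow> nat \<Rightarrow> ereal"

definition mp_mult :: "nat \<Rightarrow> mpmat \<Rightarrow> mpmat \<Rightarrow> mpmat" where
  "mp_mult n A B = (\<lambda>i j. Max ((\<lambda>t. A i t + B t j) ` {..<n}))"

definition mp_id :: mpmat where
  "mp_id = (\<lambda>i j. if i = j then 0 else -\<infinity>)"

definition mp_mat_eq :: "nat \<Rightarrow> mpmat \<Rightarrow> mpmat \<Rightarrow> bool" where
  "mp_mat_eq n A B \<longleftrightarrow> (\<forall>i<n. \<forall>j<n. A i j = B i j)"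

definition mp_wf :: "nat \<Rightarrow> mpmat \<Rightarrow> bool" where
  "mp_wf n A \<longleftrightarrow> (\<forall>i<n. \<forall>j<n. A i j \<noteq> \<infinity>)"

definition mp_inverse :: "nat \<Rightarrow> mpmat \<Rightarrow> mpmat \<Rightarrow> bool" where
  "mp_inverse n P Q \<longleftrightarrow> mp_wf n P \<and> mp_wf n Q \<and>
     mp_mat_eq n (mp_mult n P Q) mp_id \<and> mp_mat_eq n (mp_mult n Q P) mp_id"

definition mp_similar :: "nat \<Rightarrow> mpmat \<Rightarrow> mpmat \<Rightarrow> bool" where
  "mp_similar n A B \<longleftrightarrow>
     (\<exists>P Q. mp_inverse n P Q \<and> mp_mat_eq n B (mp_mult n (mp_mult n Q A) P))"

definition pseudo_diagonal :: "nat \<Rightarrow> mpmat \<Rightarrow> bool" where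
  "pseudo_diagonal n D \<longleftrightarrow>
     (\<forall>i<n. \<exists>r::real. D i i = ereal r) \<and> (\<forall>i<n. \<forall>j<n. i \<noteq> j \<longrightarrow> D i j = 0)"

definition pseudo_diagonalizable :: "nat \<Rightarrow> mpmat \<Rightarrow> bool" where
  "pseudo_diagonalizable n A \<longleftrightarrow> (\<exists>D. pseudo_diagonal n D \<and> mp_similar n A D)"

definition separable :: "nat \<Rightarrow> (nat \<Rightarrow> nat \<Rightarrow> real) \<Rightarrow> bool" where
  "separable n A \<longleftrightarrow> (\<exists>u v :: nat \<Rightarrow> real. \<forall>i<n. \<forall>j<n. A i j = u i + v j)"

definition optimal_node :: "nat \<Rightarrow> (nat \<Rightarrow> nat \<Rightarrow> real) \<Rightarrow> bool" where
  "optimal_node n A \<longleftrightarrow>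
     (\<exists>k<n. \<forall>i<n. \<forall>j<n. \<forall>l<n. A i k + A k j \<ge> A i l + A l j)"

end

theory Submission
  imports Defs
begin

lemma ereal_sum_ne_minf: "(a::ereal) \<noteq> -\<infinity> \<Longrightarrow> b \<noteq> -\<infinity> \<Longrightarrow> a + b \<noteq> -\<infinity>"
  by (cases a; cases b) auto

lemma ereal_sum_zero_fin: "(a::ereal) + b = 0 \<Longrightarrow> a \<noteq> \<infinity> \<Longrightarrow> b \<noteq> \<infinity> \<Longrightarrow> a \<noteq> -\<infinity> \<and> b \<noteq> -\<infinity>"
  by (cases a; cases b) auto

lemma Max_single_fin:
  assumes "finite S" "x0 \<in> S" "f x0 = c" "\<And>x. x \<in> S \<Longrightarrow> x \<noteq> x0 \<Longrightarrow> f x = (-\<infinity>::ereal)"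
  shows "Max (f ` S) = c"
proof (rule Max_eqI)
  show "finite (f ` S)" using assms by simp
  show "c \<in> f ` S" using assms by auto
  fix y assume "y \<in> f ` S"
  then obtain x where x: "x \<in> S" "y = f x" by auto
  show "y \<le> c" using x assms by (cases "x = x0") auto
qed

lemma key:
  fixes n :: nat and A :: "nat \<Rightarrow> nat \<Rightarrow> real"
  assumes n: "n \<ge> 2"
    and pd: "pseudo_diagonalizable n (\<lambda>i j. ereal (A i j))"
  shows "\<exists>pv. \<forall>i<n. \<forall>j<n. i \<noteq> j \<longrightarrow> A i j = pv i - pv j"
proof -
  obtain D P Q where D: "pseudo_diagonal n D" and inv: "mp_inverse n P Q"
    and eqD: "mp_mat_eq n D (mp_mult n (mp_mult n Q (\<lambda>i j. ereal (A i j))) P)"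
    using pd unfolding pseudo_diagonalizable_def mp_similar_def by blast
  have wfP: "\<And>i j. i<n \<Longrightarrow> j<n \<Longrightarrow> P i j \<noteq> \<infinity>"
    and wfQ: "\<And>i j. i<n \<Longrightarrow> j<n \<Longrightarrow> Q i j \<noteq> \<infinity>"
    using inv unfolding mp_inverse_def mp_wf_def by auto
  have PQ: "\<And>i j. i<n \<Longrightarrow> j<n \<Longrightarrow> Max ((\<lambda>t. P i t + Q t j) ` {..<n}) = (if i = j then 0 else -\<infinity>)"
    using inv unfolding mp_inverse_def mp_mat_eq_def mp_mult_def mp_id_def by auto
  have QP: "\<And>i j. i<n \<Longrightarrow> j<n \<Longrightarrow> Max ((\<lambda>t. Q i t + P t j) ` {..<n}) = (if i = j then 0 else -\<infinity>)"
    using inv unfolding mp_inverse_def mp_mat_eq_def mp_mult_def mp_id_def by auto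
  have "0 \<in> {..<n}" using n by simp
  then have ne: "{..<n} \<noteq> {}" by blast
  have a: "\<exists>t<n. P i t + Q t i = 0" if "i<n" for i
  proof -
    have "Max ((\<lambda>t. P i t + Q t i) ` {..<n}) \<in> (\<lambda>t. P i t + Q t i) ` {..<n}"
      using ne by (intro Max_in) auto
    then show ?thesis using PQ[OF that that] by auto
  qed
  have a2: "\<exists>t<n. Q i t + P t i = 0" if "i<n" for i
  proof -
    have "Max ((\<lambda>t. Q i t + P t i) ` {..<n}) \<in> (\<lambda>t. Q i t + P t i) ` {..<n}"
      using ne by (intro Max_in) auto
    then show ?thesis using QP[OF that that] by auto
  qed
  have b: "P i t + Q t j = -\<infinity>" if "i<n" "j<n" "t<n" "i\<noteq>j" for i j t
  proof -
    have "P i t + Q t j \<le> Max ((\<lambda>t. P i t + Q t j) ` {..<n})"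
      using that by (intro Max_ge) auto
    then show ?thesis using PQ[OF that(1,2)] that by auto
  qed
  have b2: "Q i t + P t j = -\<infinity>" if "i<n" "j<n" "t<n" "i\<noteq>j" for i j t
  proof -
    have "Q i t + P t j \<le> Max ((\<lambda>t. Q i t + P t j) ` {..<n})"
      using that by (intro Max_ge) auto
    then show ?thesis using QP[OF that(1,2)] that by auto
  qed
  define \<sigma> where "\<sigma> i = (SOME t. t<n \<and> P i t + Q t i = 0)" for i
  have s1: "\<sigma> i < n \<and> P i (\<sigma> i) + Q (\<sigma> i) i = 0" if "i<n" for i
    unfolding \<sigma>_def using someI_ex[OF a[OF that]] .
  have fin: "P i (\<sigma> i) \<noteq> -\<infinity> \<and> Q (\<sigma> i) i \<noteq> -\<infinity>" if "i<n" for i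
    using ereal_sum_zero_fin[of "P i (\<sigma> i)" "Q (\<sigma> i) i"] s1[OF that] wfP wfQ that by auto
  have c: "Q (\<sigma> i) r = -\<infinity>" if "i<n" "r<n" "r\<noteq>i" for i r
  proof -
    have "P i (\<sigma> i) + Q (\<sigma> i) r = -\<infinity>" using b[of i r "\<sigma> i"] s1[OF that(1)] that by auto
    then show ?thesis using fin[OF that(1)] ereal_sum_ne_minf by metis
  qed
  have d: "\<sigma> i \<noteq> \<sigma> j" if "i<n" "j<n" "i\<noteq>j" for i j
  proof
    assume "\<sigma> i = \<sigma> j"
    then have "Q (\<sigma> i) i = -\<infinity>" using c[of j i] that by auto
    then show False using fin[OF that(1)] by simp
  qed
  have e: "P s t = -\<infinity>" if st: "s<n" "t<n" "t \<noteq> \<sigma> s" for s t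
  proof (rule ccontr)
    assume ne1: "P s t \<noteq> -\<infinity>"
    obtain m where m: "m<n" "Q t m + P m t = 0" using a2[OF st(2)] by blast
    have qf: "Q t m \<noteq> -\<infinity>" using ereal_sum_zero_fin[OF m(2)] wfP wfQ m st by auto
    have "m = s"
    proof (rule ccontr)
      assume "m \<noteq> s"
      then have "P s t + Q t m = -\<infinity>" using b st m by auto
      then show False using ereal_sum_ne_minf[OF ne1 qf] by simp
    qed
    then have "Q t s + P s (\<sigma> s) = -\<infinity>" using b2[of t "\<sigma> s" s] st s1 by auto
    then show False using ereal_sum_ne_minf[OF qf[unfolded \<open>m = s\<close>]] fin[OF st(1)] by simp
  qed
  define pv where "pv i = real_of_ereal (P i (\<sigma> i))" for i
  have Pv: "P i (\<sigma> i) = ereal (pv i)" if "i<n" for i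
    using fin[OF that] wfP[OF that s1[OF that, THEN conjunct1]] unfolding pv_def
    by (cases "P i (\<sigma> i)") auto
  have Qv: "Q (\<sigma> i) i = ereal (- pv i)" if "i<n" for i
    using fin[OF that] wfQ[OF s1[OF that, THEN conjunct1] that] s1[OF that] Pv[OF that]
    by (cases "Q (\<sigma> i) i") auto
  have Dval: "D (\<sigma> i) (\<sigma> j) = ereal (- pv i + A i j + pv j)" if "i<n" "j<n" for i j
  proof -
    have h: "Max ((\<lambda>r. Q (\<sigma> i) r + ereal (A r s)) ` {..<n}) = ereal (- pv i + A i s)" if "s<n" for s
      apply (rule Max_single_fin[of "{..<n}" i])
      using \<open>i<n\<close> Qv c by auto
    have "mp_mult n (mp_mult n Q (\<lambda>i j. ereal (A i j))) P (\<sigma> i) (\<sigma> j)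
        = Max ((\<lambda>s. ereal (- pv i + A i s) + P s (\<sigma> j)) ` {..<n})"
      unfolding mp_mult_def using h by (intro arg_cong[where f=Max] image_cong) auto
    also have "\<dots> = ereal (- pv i + A i j + pv j)"
    proof (rule Max_single_fin[of "{..<n}" j])
      fix s assume s: "s \<in> {..<n}" "s \<noteq> j"
      have "P s (\<sigma> j) = -\<infinity>" using e[of s "\<sigma> j"] s1[OF that(2)] d[of j s] that s by auto
      then show "ereal (- pv i + A i s) + P s (\<sigma> j) = - \<infinity>" by simp
    qed (use that Pv in auto)
    finally show ?thesis using eqD s1 that unfolding mp_mat_eq_def by auto
  qed
  have "A i j = pv i - pv j" if "i<n" "j<n" "i\<noteq>j" for i j
  proof -
    have "D (\<sigma> i) (\<sigma> j) = 0" using D d[OF that] s1 that unfolding pseudo_diagonal_def by auto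
    then show ?thesis using Dval[OF that(1,2)] by (simp add: zero_ereal_def)
  qed
  then have "\<forall>i<n. \<forall>j<n. i \<noteq> j \<longrightarrow> A i j = pv i - pv j" by simp
  then show ?thesis by (rule exI[of _ pv])
qed

theorem theorem4p19:
  fixes n :: nat and A :: "nat \<Rightarrow> nat \<Rightarrow> real"
  assumes "n \<ge> 2"
    and "pseudo_diagonalizable n (\<lambda>i j. ereal (A i j))"
  shows "(n = 2 \<longrightarrow> (separable n A \<longleftrightarrow> A 0 0 + A 1 1 = 0))
       \<and> (n \<ge> 3 \<longrightarrow> (separable n A \<longleftrightarrow> (\<forall>i<n. A i i = 0)))
       \<and> (optimal_node n A \<longleftrightarrow> (\<exists>k<n. A k k \<ge> 0 \<and> (\<forall>i<n. i \<noteq> k \<longrightarrow> A i i \<le> 0)))"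
proof -
  obtain pv where pv0: "\<forall>i<n. \<forall>j<n. i \<noteq> j \<longrightarrow> A i j = pv i - pv j"
    using key[OF assms] by (elim exE)
  have pv: "\<And>i j. i<n \<Longrightarrow> j<n \<Longrightarrow> i \<noteq> j \<Longrightarrow> A i j = pv i - pv j"
    using pv0 by simp
  have P1: "n = 2 \<longrightarrow> (separable n A \<longleftrightarrow> A 0 0 + A 1 1 = 0)"
  proof
    assume n2: "n = 2"
    have p1: "A 0 1 = pv 0 - pv 1" using pv[of 0 1] n2 by simp
    have p2: "A 1 0 = pv 1 - pv 0" using pv[of 1 0] n2 by simp
    show "separable n A \<longleftrightarrow> A 0 0 + A 1 1 = 0"
    proof
      assume "separable n A"
      then obtain u v where uv: "\<forall>i<n. \<forall>j<n. A i j = u i + v j" unfolding separable_def by blast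
      have "A 0 0 = u 0 + v 0" "A 1 1 = u 1 + v 1" "A 0 1 = u 0 + v 1" "A 1 0 = u 1 + v 0"
        using uv n2 by auto
      then show "A 0 0 + A 1 1 = 0" using p1 p2 by linarith
    next
      assume h: "A 0 0 + A 1 1 = 0"
      have h2: "\<forall>i<n. \<forall>j<n. A i j = A i 0 + (A 0 j - A 0 0)"
      proof (intro allI impI)
        fix i j assume ij: "i<n" "j<n"
        have c2: "i = 0 \<or> i = 1" "j = 0 \<or> j = 1" using ij n2 by auto
        have c11: "A 1 1 = A 1 0 + (A 0 1 - A 0 0)" using h p1 p2 by linarith
        from c2 show "A i j = A i 0 + (A 0 j - A 0 0)"
          using c11 by (elim disjE) simp_all
      qed
      show "separable n A" unfolding separable_def
        by (rule exI[of _ "\<lambda>i. A i 0"], rule exI[of _ "\<lambda>j. A 0 j - A 0 0"], rule h2)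
    qed
  qed
  have P2: "n \<ge> 3 \<longrightarrow> (separable n A \<longleftrightarrow> (\<forall>i<n. A i i = 0))"
  proof
    assume n3: "n \<ge> 3"
    show "separable n A \<longleftrightarrow> (\<forall>i<n. A i i = 0)"
    proof
      assume "separable n A"
      then obtain u v where uv: "\<forall>i<n. \<forall>j<n. A i j = u i + v j" unfolding separable_def by blast
      show "\<forall>i<n. A i i = 0"
      proof (intro allI impI)
        fix i assume i: "i<n"
        obtain j k where jk: "j<n" "k<n" "j\<noteq>i" "k\<noteq>i" "j\<noteq>k"
        proof (cases "i = 0")
          case True then show ?thesis using that[of 1 2] n3 by auto
        next
          case F: False
          show ?thesis
          proof (cases "i = 1")
            case True then show ?thesis using that[of 0 2] n3 by auto
          next
            case False then show ?thesis using that[of 0 1] n3 F by auto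
          qed
        qed
        have "A i i + A j k = A i k + A j i" using uv i jk by simp
        then show "A i i = 0" using pv[of j k] pv[of i k] pv[of j i] i jk by auto
      qed
    next
      assume h: "\<forall>i<n. A i i = 0"
      have "\<forall>i<n. \<forall>j<n. A i j = pv i + (- pv j)"
      proof (intro allI impI)
        fix i j assume ij: "i<n" "j<n"
        show "A i j = pv i + (- pv j)"
        proof (cases "i = j")
          case True then show ?thesis using h ij by simp
        next
          case False then show ?thesis using pv[OF ij False] by simp
        qed
      qed
      then have h3: "\<forall>i<n. \<forall>j<n. A i j = pv i + (- pv j)" .
      show "separable n A" unfolding separable_def
        by (rule exI[of _ pv], rule exI[of _ "\<lambda>j. - pv j"], rule h3)
    qed
  qed
  define C where "C i j = (if i = j then A i i else 0)" for i j
  have AC: "A i j = pv i - pv j + C i j" if "i<n" "j<n" for i j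
    using pv[OF that] unfolding C_def by auto
  have P3: "optimal_node n A \<longleftrightarrow> (\<exists>k<n. A k k \<ge> 0 \<and> (\<forall>i<n. i \<noteq> k \<longrightarrow> A i i \<le> 0))"
  proof
    assume "optimal_node n A"
    then obtain k where k: "k<n" and opt: "\<forall>i<n. \<forall>j<n. \<forall>l<n. A i k + A k j \<ge> A i l + A l j"
      unfolding optimal_node_def by blast
    obtain l where l: "l<n" "l \<noteq> k"
    proof (cases "k = 0")
      case True then show ?thesis using that[of 1] assms(1) by auto
    next
      case False then show ?thesis using that[of 0] assms(1) by auto
    qed
    have "A k k + A k k \<ge> A k l + A l k" using opt k l by blast
    then have "A k k \<ge> 0" using pv[of k l] pv[of l k] k l by auto
    moreover have "A i i \<le> 0" if "i<n" "i\<noteq>k" for i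
    proof -
      have "A i k + A k i \<ge> A i i + A i i" using opt k that by blast
      then show ?thesis using pv[of k i] pv[of i k] k that by auto
    qed
    ultimately show "\<exists>k<n. A k k \<ge> 0 \<and> (\<forall>i<n. i \<noteq> k \<longrightarrow> A i i \<le> 0)" using k by blast
  next
    assume "\<exists>k<n. A k k \<ge> 0 \<and> (\<forall>i<n. i \<noteq> k \<longrightarrow> A i i \<le> 0)"
    then obtain k where k: "k<n" "A k k \<ge> 0" "\<forall>i<n. i \<noteq> k \<longrightarrow> A i i \<le> 0" by blast
    have "A i k + A k j \<ge> A i l + A l j" if "i<n" "j<n" "l<n" for i j l
    proof -
      have L: "C i k + C k j \<ge> 0" using k unfolding C_def by auto
      have R: "l \<noteq> k \<Longrightarrow> C i l + C l j \<le> 0" using k that unfolding C_def by auto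
      show ?thesis
      proof (cases "l = k")
        case True then show ?thesis by simp
      next
        case False
        have e1: "A i k + A k j = pv i - pv j + (C i k + C k j)" using AC[of i k] AC[of k j] that k(1) by simp
        have e2: "A i l + A l j = pv i - pv j + (C i l + C l j)" using AC[of i l] AC[of l j] that by simp
        show ?thesis using e1 e2 L R[OF False] by linarith
      qed
    qed
    then show "optimal_node n A" unfolding optimal_node_def using k by blast
  qed
  show ?thesis by (intro conjI P1 P2 P3)
qed

end
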